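(* Assume that $\delta=\delta_1\cdots\delta_m$ is a permutation of length $m$ and $\pi=\pi_1\cdots\pi_n$ is a permutation of length $n$, disjoint from each other, where $\mathrm{des}(\delta) = r$ and $\mathrm{des}(\pi) = s$. Moreover, $\delta_1<\delta_2$ and all of the elements of $\delta$ are larger than the elements of $\pi$. Then \begin{align*} (1)\quad & \sum_{\substack{\alpha \in \mathrm{Sh}_l(\pi,\delta) \\ \mathrm{des}(\alpha) = d}} q^{\mathrm{maj}(\alpha)}= {m-r+s \brack d-r} {n-s+r-1\brack d-s-1} q^{\mathrm{maj}(\delta) + \mathrm{maj}(\pi) + (d - s)(d - r)}, \\ (2)\quad & \sum_{\substack{\alpha \in \mathrm{Sh}_{ls}(\pi,\delta) \\ \mathrm{des}(\alpha) = d}} q^{\mathrm{maj}(\alpha)}= {m-r+s-1 \brack d-r} {n-s+r-1\brack d-s-1} q^{\mathrm{maj}(\delta) + \mathrm{maj}(\pi) + (d - s)(d - r)}, \\ (3)\quad & \sum_{\substack{\alpha \in \mathrm{Sh}_{ll}(\pi,\delta) \\ \mathrm{des}(\alpha) = d}} q^{\mathrm{maj}(\alpha)}= {m-r+s-1 \brack d-r} {n-s+r-1\brack d-s-1} q^{\mathrm{maj}(\delta) + \mathrm{maj}(\pi) + (d- s+1)(d - r)}. \end{align*}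
   Context: A permutation of length $n$ here means a sequence of $n$ distinct integers (not necessarily $1,\dots,n$); two permutations are disjoint if they have no letters in common. For $\alpha=\alpha_1\cdots\alpha_n$, $\mathrm{Des}(\alpha)=\{i: \alpha_i>\alpha_{i+1}\}$, $\mathrm{des}(\alpha)=|\mathrm{Des}(\alpha)|$ and $\mathrm{maj}(\alpha)=\sum_{i\in\mathrm{Des}(\alpha)} i$. The Gaussian polynomial is ${n \brack m}=\frac{(1-q^n)(1-q^{n-1})\cdots (1-q^{n-m+1})}{(1-q^m)(1-q^{m-1})\cdots (1-q)}$. For disjoint permutations $\pi=\pi_1\cdots\pi_n$ and $\delta=\delta_1\cdots\delta_m$, a shuffle of $\pi$ and $\delta$ is a permutation $\alpha=\alpha_1\cdots\alpha_{m+n}$ containing both $\pi$ and $\delta$ as subsequences. $\mathrm{Sh}_l(\pi,\delta)$ is the set of shuffles with $\alpha_1=\delta_1$; $\mathrm{Sh}_{ls}(\pi,\delta)$ is the set of shuffles with $\alpha_1=\delta_1$ and $\alpha_{n+m}=\delta_m$ (the last letter of $\delta$); $\mathrm{Sh}_{ll}(\pi,\delta)$ is the set of shuffles with $\alpha_1=\delta_1$ and $\alpha_2=\delta_2$. *)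

theory Defs
  imports "HOL-Computational_Algebra.Polynomial"
begin

text \<open>Permutations are lists of distinct integers. Positions in the paper are 1-based:
  the 0-based list position i is a descent (at paper position i+1) iff xs!i > xs!(i+1).\<close>

definition Des :: "int list \<Rightarrow> nat set" where
  "Des xs = {i. 1 \<le> i \<and> i < length xs \<and> xs ! (i - 1) > xs ! i}"

definition des :: "int list \<Rightarrow> nat" where
  "des xs = card (Des xs)"

definition maj :: "int list \<Rightarrow> nat" where
  "maj xs = (\<Sum>i\<in>Des xs. i)"

abbreviation qvar :: "int poly" where
  "qvar \<equiv> [:0, 1:]"

text \<open>Gaussian polynomial [N brack K] as the (exact) polynomial quotient of the product
  formula; by convention it is 0 when K < 0.\<close>
definition gauss :: "int \<Rightarrow> int \<Rightarrow> int poly" where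
  "gauss N K = (if K < 0 then 0 else
     (\<Prod>i<nat K. (1 - qvar ^ nat (N - int i))) div (\<Prod>i\<in>{1..nat K}. (1 - qvar ^ i)))"

definition Sh_l :: "int list \<Rightarrow> int list \<Rightarrow> int list set" where
  "Sh_l p d = {a \<in> shuffles p d. a ! 0 = d ! 0}"

definition Sh_ls :: "int list \<Rightarrow> int list \<Rightarrow> int list set" where
  "Sh_ls p d = {a \<in> shuffles p d. a ! 0 = d ! 0 \<and> last a = last d}"

definition Sh_ll :: "int list \<Rightarrow> int list \<Rightarrow> int list set" where
  "Sh_ll p d = {a \<in> shuffles p d. a ! 0 = d ! 0 \<and> a ! 1 = d ! 1}"

end

theory Submission
  imports Defs
begin


definition ev :: "int poly \<Rightarrow> real \<Rightarrow> real" where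
  "ev p x = poly (map_poly real_of_int p) x"

lemma mp_add: "map_poly (real_of_int) (p + q) = map_poly of_int p + map_poly of_int q"
  by (rule poly_eqI) (simp add: coeff_map_poly)
lemma mp_diff: "map_poly (real_of_int) (p - q) = map_poly of_int p - map_poly of_int q"
  by (rule poly_eqI) (simp add: coeff_map_poly)
lemma mp_mult: "map_poly (real_of_int) (p * q) = map_poly of_int p * map_poly of_int q"
  by (rule poly_eqI) (simp add: coeff_map_poly coeff_mult)

lemma ev_add[simp]: "ev (p + q) x = ev p x + ev q x" by (simp add: ev_def mp_add)
lemma ev_diff[simp]: "ev (p - q) x = ev p x - ev q x" by (simp add: ev_def mp_diff)
lemma ev_mult[simp]: "ev (p * q) x = ev p x * ev q x" by (simp add: ev_def mp_mult)
lemma ev_1[simp]: "ev 1 x = 1" by (simp add: ev_def)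
lemma ev_0[simp]: "ev 0 x = 0" by (simp add: ev_def)
lemma ev_q[simp]: "ev qvar x = x" by (simp add: ev_def map_poly_pCons)
lemma ev_pow[simp]: "ev (p ^ n) x = ev p x ^ n" by (induction n) auto
lemma ev_sum[simp]: "ev (sum f A) x = (\<Sum>a\<in>A. ev (f a) x)"
  by (induction A rule: infinite_finite_induct) auto
lemma ev_prod[simp]: "ev (prod f A) x = (\<Prod>a\<in>A. ev (f a) x)"
  by (induction A rule: infinite_finite_induct) auto

lemma ev_inj:
  assumes "\<And>x. x > 1 \<Longrightarrow> ev p x = ev q x" shows "p = q"
proof -
  let ?r = "map_poly real_of_int p - map_poly of_int q"
  have "?r = 0"
  proof (rule ccontr)
    assume "?r \<noteq> 0"
    hence "finite {x. poly ?r x = 0}" by (rule poly_roots_finite)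
    moreover have "{1<..} \<subseteq> {x. poly ?r x = 0}" using assms by (auto simp: ev_def)
    ultimately have "finite {1::real<..}" by (rule finite_subset[rotated])
    thus False using infinite_Ioi by blast
  qed
  hence "map_poly real_of_int p = map_poly of_int q" by simp
  hence "\<And>n. coeff (map_poly real_of_int p) n = coeff (map_poly real_of_int q) n" by simp
  hence "\<And>n. coeff p n = coeff q n" by (simp add: coeff_map_poly)
  thus ?thesis by (rule poly_eqI)
qed

definition nm :: "int \<Rightarrow> int \<Rightarrow> real \<Rightarrow> real" where
  "nm N K x = (\<Prod>i<nat K. 1 - x ^ nat (N - int i))"
definition dn :: "int \<Rightarrow> real \<Rightarrow> real" where
  "dn K x = (\<Prod>i\<in>{1..nat K}. 1 - x ^ i)"
definition gr :: "int \<Rightarrow> int \<Rightarrow> real \<Rightarrow> real" where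
  "gr N K x = (if K < 0 then 0 else nm N K x / dn K x)"

lemma pow_ne1: "(x::real) > 1 \<Longrightarrow> a \<ge> 1 \<Longrightarrow> x ^ a \<noteq> 1"
proof -
  assume "x > 1" "a \<ge> 1"
  hence "1 < x ^ a" by (intro one_less_power) auto
  thus ?thesis by simp
qed
lemma dn_nz: "x > 1 \<Longrightarrow> dn K x \<noteq> 0"
  unfolding dn_def by (subst prod_zero_iff) (auto dest: pow_ne1)

lemma gr_neg[simp]: "K < 0 \<Longrightarrow> gr N K x = 0" by (simp add: gr_def)
lemma gr_0[simp]: "gr N 0 x = 1" by (simp add: gr_def nm_def dn_def)
lemma gr_big: assumes "0 \<le> N" "N < K" shows "gr N K x = 0"
proof -
  have "nat N \<in> {..<nat K}" using assms by auto
  moreover have "1 - x ^ nat (N - int (nat N)) = 0" using assms by simp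
  ultimately have "nm N K x = 0" unfolding nm_def by (metis finite_lessThan prod_zero)
  thus ?thesis by (simp add: gr_def)
qed

lemma gr_pascal:
  assumes "N \<ge> 1" "x > 1"
  shows "gr N K x = gr (N - 1) K x + x powi (N - K) * gr (N - 1) (K - 1) x"
proof (cases "K \<le> 0")
  case True
  then show ?thesis by (cases "K = 0") auto
next
  case False
  define k where "k = nat (K - 1)"
  have k: "K = int k + 1" using False by (simp add: k_def)
  define P where "P = nm (N - 1) (int k) x"
  define D where "D = dn (int k) x"
  have D0: "D \<noteq> 0" "1 - x^(k+1) \<noteq> 0" using dn_nz pow_ne1[of x "k+1"] assms unfolding D_def by auto
  have nmK: "nm N K x = (1 - x ^ nat N) * P"
  proof -
    have e: "nat (int k + 1) = Suc k" by simp
    show ?thesis unfolding k nm_def P_def e prod.lessThan_Suc_shift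
      by (simp add: algebra_simps)
  qed
  have nmK1: "nm (N - 1) K x = P * (1 - x ^ nat (N - 1 - int k))"
  proof -
    have e: "nat (int k + 1) = Suc k" by simp
    show ?thesis unfolding k nm_def P_def e by (simp add: algebra_simps)
  qed
  have dnK: "dn K x = D * (1 - x^(k+1))"
  proof -
    have e: "nat (int k + 1) = Suc k" by simp
    show ?thesis unfolding k dn_def D_def e by (simp add: algebra_simps)
  qed
  have L: "gr N K x = (1 - x ^ nat N) * P / (D * (1 - x^(k+1)))"
    using k nmK dnK by (simp add: gr_def)
  have R: "gr (N - 1) K x + x powi (N - K) * gr (N - 1) (K - 1) x
     = P * (1 - x ^ nat (N - 1 - int k)) / (D * (1 - x^(k+1))) + x powi (N - 1 - int k) * (P / D)"
  proof -
    have e: "N - K = N - 1 - int k" "K - 1 = int k" using k by simp_all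
    show ?thesis unfolding e using k nmK1 dnK by (simp add: gr_def P_def D_def)
  qed
  show ?thesis
  proof (cases "N - 1 - int k \<ge> 0")
    case True
    define j where "j = nat (N - 1 - int k)"
    have j: "N - 1 - int k = int j" "nat N = j + k + 1" using True by (auto simp: j_def)
    show ?thesis unfolding L R j power_int_of_nat using D0
      by (simp add: field_simps power_add)
  next
    case False
    have "nat (N - 1) \<in> {..<k}" "1 - x ^ nat (N - 1 - int (nat (N - 1))) = 0"
      using False assms by auto
    hence "P = 0" unfolding P_def nm_def by (metis finite_lessThan prod_zero nat_int)
    then show ?thesis unfolding L R by simp
  qed
qed

fun qb :: "nat \<Rightarrow> nat \<Rightarrow> int poly" where
  "qb n 0 = 1"
| "qb 0 (Suc k) = 0"
| "qb (Suc n) (Suc k) = qb n (Suc k) + qvar ^ (n - k) * qb n k"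

lemma t1: "ev (qb (Suc n) (Suc k)) x = ev (qb n (Suc k)) x + x ^ (n - k) * ev (qb n k) x"
  by (simp only: qb.simps ev_add ev_mult ev_pow ev_q)

lemma t2: assumes "x > (1::real)" shows "gr (int (Suc n)) (int (Suc k)) x = gr (int n) (int (Suc k)) x + x powi (int n - int k) * gr (int n) (int k) x"
  proof -
    have a: "int (Suc n) - 1 = int n" "int (Suc k) - 1 = int k" "int (Suc n) - int (Suc k) = int n - int k" by simp_all
    show ?thesis using gr_pascal[of "int (Suc n)" x "int (Suc k)"] assms unfolding a by simp
  qed

lemma t3: "k \<le> n \<Longrightarrow> (x::real) powi (int n - int k) = x ^ (n - k)"
proof -
  assume "k \<le> n"
  hence "int n - int k = int (n - k)" by simp
  thus ?thesis by (simp only: power_int_of_nat)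
qed

lemma ev_qb: "x > 1 \<Longrightarrow> ev (qb n k) x = gr (int n) (int k) x"
proof (induction n k rule: qb.induct)
  case (1 n)
  then show ?case by simp
next
  case (2 k)
  then show ?case by (simp add: gr_big)
next
  case (3 n k)
  have E: "ev (qb (Suc n) (Suc k)) x = gr (int n) (int (Suc k)) x + x ^ (n - k) * gr (int n) (int k) x"
    using 3 t1 by simp
  show ?case
  proof (cases "k \<le> n")
    case True
    then show ?thesis unfolding E t2[OF 3(3)] t3[OF True] by simp
  next
    case False
    hence "gr (int n) (int k) x = 0" by (intro gr_big) auto
    then show ?thesis unfolding E t2[OF 3(3)] by simp
  qed
qed

lemma gauss_ev:
  assumes "N \<ge> 0" "x > 1"
  shows "ev (gauss N K) x = gr N K x"
proof (cases "K < 0")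
  case True
  then show ?thesis by (simp add: gauss_def)
next
  case False
  define num where "num = (\<Prod>i<nat K. (1 - qvar ^ nat (N - int i)))"
  define den :: "int poly" where "den = (\<Prod>i\<in>{1..nat K}. (1 - qvar ^ i))"
  have evn: "ev num y = nm N K y" for y by (simp add: num_def nm_def)
  have evd: "ev den y = dn K y" for y by (simp add: den_def dn_def)
  have "num = qb (nat N) (nat K) * den"
  proof (rule ev_inj)
    fix y :: real assume y: "y > 1"
    have "ev (qb (nat N) (nat K)) y = nm N K y / dn K y"
      using y assms False by (simp add: ev_qb gr_def)
    thus "ev num y = ev (qb (nat N) (nat K) * den) y"
      using dn_nz[OF y, of K] by (simp add: evn evd)
  qed
  moreover have "den \<noteq> 0"
  proof
    assume "den = 0"
    hence "ev den 2 = 0" by simp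
    thus False using dn_nz[of 2 K] evd by simp
  qed
  moreover have "gauss N K = num div den"
    using False unfolding gauss_def num_def den_def by simp
  ultimately have "gauss N K = qb (nat N) (nat K)" by simp
  thus ?thesis using assms False by (simp add: ev_qb)
qed



lemma snoc_shuffles_single: "ys @ [z] \<in> shuffles [z] ys"
  by (induction ys) (auto intro: Cons_in_shuffles_rightI)

lemma snoc_in_shuffles_leftI: "zs \<in> shuffles xs ys \<Longrightarrow> zs @ [z] \<in> shuffles (xs @ [z]) ys"
proof (induction xs ys arbitrary: zs rule: shuffles.induct)
  case (1 ys)
  then show ?case using snoc_shuffles_single by simp
next
  case (2 xs)
  then show ?case by simp
next
  case (3 x xs y ys)
  from "3.prems" consider (a) w where "zs = x # w" "w \<in> shuffles xs (y # ys)"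
    | (b) w where "zs = y # w" "w \<in> shuffles (x # xs) ys" by auto
  then show ?case
  proof cases
    case a
    then show ?thesis using "3.IH"(1)[OF a(2)] by (auto intro: Cons_in_shuffles_leftI)
  next
    case b
    then show ?thesis using "3.IH"(2)[OF b(2)] by (auto intro: Cons_in_shuffles_rightI)
  qed
qed

lemma snoc_in_shuffles_rightI: "zs \<in> shuffles xs ys \<Longrightarrow> zs @ [z] \<in> shuffles xs (ys @ [z])"
  using snoc_in_shuffles_leftI[of zs ys xs z] by (simp add: shuffles_commutes)

lemma snoc_in_shuffles_D:
  "zs @ [z] \<in> shuffles xs ys \<Longrightarrow>
     (xs \<noteq> [] \<and> last xs = z \<and> zs \<in> shuffles (butlast xs) ys) \<or>
     (ys \<noteq> [] \<and> last ys = z \<and> zs \<in> shuffles xs (butlast ys))"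
proof (induction zs arbitrary: xs ys)
  case Nil
  hence "length xs + length ys = 1" using length_shuffles by fastforce
  hence "(xs = [] \<and> length ys = 1) \<or> (ys = [] \<and> length xs = 1)"
    by (cases xs; cases ys) auto
  then show ?case using Nil by (auto simp: length_Suc_conv)
next
  case (Cons w ws)
  from Cons.prems have "w # (ws @ [z]) \<in> shuffles xs ys" by simp
  then consider (a) "xs \<noteq> []" "hd xs = w" "ws @ [z] \<in> shuffles (tl xs) ys"
    | (b) "ys \<noteq> []" "hd ys = w" "ws @ [z] \<in> shuffles xs (tl ys)"
    unfolding Cons_in_shuffles_iff by blast
  then show ?case
  proof cases
    case a
    then obtain xs' where xs: "xs = w # xs'" by (cases xs) auto
    from Cons.IH[OF a(3)[unfolded xs list.sel]] show ?thesis
      unfolding xs by (auto intro: Cons_in_shuffles_leftI)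
  next
    case b
    then obtain ys' where ys: "ys = w # ys'" by (cases ys) auto
    from Cons.IH[OF b(3)[unfolded ys list.sel]] show ?thesis
      unfolding ys by (auto intro: Cons_in_shuffles_rightI)
  qed
qed

lemma snoc_in_shuffles_iff:
  "zs @ [z] \<in> shuffles xs ys \<longleftrightarrow>
     (xs \<noteq> [] \<and> last xs = z \<and> zs \<in> shuffles (butlast xs) ys) \<or>
     (ys \<noteq> [] \<and> last ys = z \<and> zs \<in> shuffles xs (butlast ys))" (is "?lhs \<longleftrightarrow> ?rhs")
proof
  assume "zs @ [z] \<in> shuffles xs ys" thus "?rhs" by (rule snoc_in_shuffles_D)
next
  assume "?rhs"
  thus "zs @ [z] \<in> shuffles xs ys"
  proof
    assume h: "xs \<noteq> [] \<and> last xs = z \<and> zs \<in> shuffles (butlast xs) ys"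
    thus ?thesis using snoc_in_shuffles_leftI[of zs "butlast xs" ys z] append_butlast_last_id[of xs] by metis
  next
    assume h: "ys \<noteq> [] \<and> last ys = z \<and> zs \<in> shuffles xs (butlast ys)"
    thus ?thesis using snoc_in_shuffles_rightI[of zs xs "butlast ys" z] append_butlast_last_id[of ys] by metis
  qed
qed

lemma Des_sub: "Des xs \<subseteq> {1..<length xs}" by (auto simp: Des_def)
lemma finite_Des[simp]: "finite (Des xs)" using Des_sub finite_subset by blast

lemma Des_snoc:
  assumes "xs \<noteq> []"
  shows "Des (xs @ [z]) = Des xs \<union> (if z < last xs then {length xs} else {})"
proof -
  have l: "last xs = xs ! (length xs - 1)" using assms by (simp add: last_conv_nth)
  show ?thesis
  proof (rule set_eqI)
    fix i
    consider "i < length xs" | "i = length xs" | "i > length xs" by linarith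
    then show "i \<in> Des (xs @ [z]) \<longleftrightarrow> i \<in> Des xs \<union> (if z < last xs then {length xs} else {})"
    proof cases
      case 1
      then show ?thesis unfolding Des_def by (auto simp: nth_append)
    next
      case 2
      have "(xs @ [z]) ! (i - 1) = last xs" "(xs @ [z]) ! i = z"
        using 2 assms by (auto simp: nth_append l)
      moreover have "1 \<le> length xs" using assms by (cases xs) auto
      ultimately show ?thesis using 2 assms unfolding Des_def by auto
    next
      case 3
      then show ?thesis unfolding Des_def by auto
    qed
  qed
qed

lemma des_snoc:
  assumes "xs \<noteq> []"
  shows "des (xs @ [z]) = des xs + (if z < last xs then 1 else 0)"
proof -
  have "length xs \<notin> Des xs" using Des_sub by fastforce
  thus ?thesis unfolding des_def Des_snoc[OF assms] by auto
qed

lemma maj_snoc: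
  assumes "xs \<noteq> []"
  shows "maj (xs @ [z]) = maj xs + (if z < last xs then length xs else 0)"
proof -
  have "length xs \<notin> Des xs" using Des_sub by fastforce
  thus ?thesis unfolding maj_def Des_snoc[OF assms] by auto
qed

lemma Des_Cons:
  assumes "xs \<noteq> []" "a < hd xs"
  shows "Des (a # xs) = Suc ` Des xs"
proof -
  have h: "xs ! 0 = hd xs" using assms by (simp add: hd_conv_nth)
  show ?thesis
  proof (rule set_eqI)
    fix i show "i \<in> Des (a # xs) \<longleftrightarrow> i \<in> Suc ` Des xs"
    proof (cases i)
      case 0 then show ?thesis by (auto simp: Des_def)
    next
      case (Suc j)
      show ?thesis
      proof (cases j)
        case 0 then show ?thesis using Suc assms h by (auto simp: Des_def)
      next
        case (Suc k)
        then show ?thesis using \<open>i = Suc j\<close> by (auto simp: Des_def image_iff)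
      qed
    qed
  qed
qed

lemma des_Cons: "xs \<noteq> [] \<Longrightarrow> a < hd xs \<Longrightarrow> des (a # xs) = des xs"
  unfolding des_def by (simp add: Des_Cons card_image)

lemma sum_Suc_card: "sum Suc A = sum id A + card A"
  by (induction A rule: infinite_finite_induct) auto

lemma maj_Cons: "xs \<noteq> [] \<Longrightarrow> a < hd xs \<Longrightarrow> maj (a # xs) = maj xs + des xs"
  unfolding maj_def des_def by (simp add: Des_Cons sum.reindex sum_Suc_card)

definition W :: "int list set \<Rightarrow> int \<Rightarrow> real \<Rightarrow> real" where
  "W A d x = (\<Sum>\<alpha>\<in>{\<alpha>\<in>A. int (des \<alpha>) = d}. x ^ maj \<alpha>)"

lemma W_alt: "finite A \<Longrightarrow> W A d x = (\<Sum>\<alpha>\<in>A. if int (des \<alpha>) = d then x ^ maj \<alpha> else 0)"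
  unfolding W_def by (simp add: sum.inter_filter)

lemma W_Un: "finite A \<Longrightarrow> finite B \<Longrightarrow> A \<inter> B = {} \<Longrightarrow> W (A \<union> B) d x = W A d x + W B d x"
  by (simp add: W_alt sum.union_disjoint)

lemma W_empty[simp]: "W {} d x = 0" by (simp add: W_def)

lemma W_single: "W {a} d x = (if int (des a) = d then x ^ maj a else 0)"
  by (simp add: W_alt)

lemma W_snoc:
  assumes "finite A" "\<And>\<beta>. \<beta> \<in> A \<Longrightarrow> \<beta> \<noteq> [] \<and> length \<beta> = L \<and> (z < last \<beta> \<longleftrightarrow> c)"
  shows "W ((\<lambda>\<beta>. \<beta> @ [z]) ` A) d x = (if c then x ^ L * W A (d - 1) x else W A d x)"
proof -
  have inj: "inj_on (\<lambda>\<beta>. \<beta> @ [z]) A" by (auto simp: inj_on_def)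
  have "W ((\<lambda>\<beta>. \<beta> @ [z]) ` A) d x = (\<Sum>\<beta>\<in>A. if int (des (\<beta> @ [z])) = d then x ^ maj (\<beta> @ [z]) else 0)"
    using assms(1) inj by (simp add: W_alt sum.reindex)
  also have "\<dots> = (\<Sum>\<beta>\<in>A. if c then x ^ L * (if int (des \<beta>) = d - 1 then x ^ maj \<beta> else 0)
                           else (if int (des \<beta>) = d then x ^ maj \<beta> else 0))"
  proof (rule sum.cong[OF refl])
    fix \<beta> assume b: "\<beta> \<in> A"
    from assms(2)[OF b] have ne: "\<beta> \<noteq> []" and len: "length \<beta> = L" and cz: "(z < last \<beta>) = c" by auto
    show "(if int (des (\<beta> @ [z])) = d then x ^ maj (\<beta> @ [z]) else 0) =
       (if c then x ^ L * (if int (des \<beta>) = d - 1 then x ^ maj \<beta> else 0)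
                           else (if int (des \<beta>) = d then x ^ maj \<beta> else 0))"
      using cz len by (auto simp: des_snoc[OF ne] maj_snoc[OF ne] power_add)
  qed
  also have "\<dots> = (if c then x ^ L * W A (d - 1) x else W A d x)"
    using assms(1) by (cases c) (simp_all add: W_alt sum_distrib_left)
  finally show ?thesis .
qed

lemma W_Cons:
  assumes "finite A" "\<And>\<beta>. \<beta> \<in> A \<Longrightarrow> \<beta> \<noteq> [] \<and> a < hd \<beta>" "d \<ge> 0"
  shows "W ((#) a ` A) d x = x ^ nat d * W A d x"
proof -
  have inj: "inj_on ((#) a) A" by (auto simp: inj_on_def)
  have "W ((#) a ` A) d x = (\<Sum>\<beta>\<in>A. if int (des (a # \<beta>)) = d then x ^ maj (a # \<beta>) else 0)"
    using assms(1) inj by (simp add: W_alt sum.reindex)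
  also have "\<dots> = (\<Sum>\<beta>\<in>A. x ^ nat d * (if int (des \<beta>) = d then x ^ maj \<beta> else 0))"
  proof (rule sum.cong[OF refl])
    fix \<beta> assume b: "\<beta> \<in> A"
    from assms(2)[OF b] have ne: "\<beta> \<noteq> []" and h: "a < hd \<beta>" by auto
    show "(if int (des (a # \<beta>)) = d then x ^ maj (a # \<beta>) else 0) =
          x ^ nat d * (if int (des \<beta>) = d then x ^ maj \<beta> else 0)"
      by (auto simp: des_Cons[OF ne h] maj_Cons[OF ne h] power_add)
  qed
  also have "\<dots> = x ^ nat d * W A d x"
    using assms(1) by (simp add: W_alt sum_distrib_left)
  finally show ?thesis .
qed

definition ok :: "int list \<Rightarrow> int list \<Rightarrow> bool" where
  "ok p dl \<longleftrightarrow> distinct p \<and> distinct dl \<and> set p \<inter> set dl = {} \<and> (\<forall>u\<in>set dl. \<forall>v\<in>set p. v < u)"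

definition GS :: "int list \<Rightarrow> int list \<Rightarrow> int list set" where
  "GS p dl = {\<alpha>\<in>shuffles p dl. \<alpha> ! 0 = dl ! 0 \<and> last \<alpha> = last dl}"
definition HS :: "int list \<Rightarrow> int list \<Rightarrow> int list set" where
  "HS p dl = {\<alpha>\<in>shuffles p dl. \<alpha> ! 0 = dl ! 0 \<and> last \<alpha> = last p}"

lemma finite_GS[simp]: "finite (GS p dl)" by (simp add: GS_def)
lemma finite_HS[simp]: "finite (HS p dl)" by (simp add: HS_def)

lemma ok_snoc_dl: "ok p (dl @ [z]) \<Longrightarrow> ok p dl" by (auto simp: ok_def)
lemma ok_snoc_p: "ok (p @ [y]) dl \<Longrightarrow> ok p dl" by (auto simp: ok_def)

lemma shuffles_last_cases:
  assumes "\<beta> \<in> shuffles p dl" "\<beta> \<noteq> []"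
  shows "(p \<noteq> [] \<and> last \<beta> = last p) \<or> (dl \<noteq> [] \<and> last \<beta> = last dl)"
proof -
  have "butlast \<beta> @ [last \<beta>] \<in> shuffles p dl" using assms by simp
  thus ?thesis unfolding snoc_in_shuffles_iff by auto
qed

lemma GH_mem:
  assumes "\<beta> \<in> GS p dl \<union> HS p dl" "dl \<noteq> []"
  shows "\<beta> \<in> shuffles p dl" "\<beta> \<noteq> []" "\<beta> ! 0 = dl ! 0" "length \<beta> = length p + length dl"
  using assms by (auto simp: GS_def HS_def length_shuffles)

lemma GH_disj:
  assumes "ok p dl" "p \<noteq> []" "dl \<noteq> []"
  shows "GS p dl \<inter> HS p dl = {}"
proof -
  have d: "set p \<inter> set dl = {}" using assms(1) by (simp add: ok_def)
  have "last p \<noteq> last dl" using assms(2,3) last_in_set[of p] last_in_set[of dl] d by (metis disjoint_iff)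
  thus ?thesis by (auto simp: GS_def HS_def)
qed

lemma GS_snoc:
  assumes "ok p (dl @ [z])" "p \<noteq> []" "dl \<noteq> []"
  shows "GS p (dl @ [z]) = (\<lambda>\<beta>. \<beta> @ [z]) ` (GS p dl \<union> HS p dl)"
proof (rule set_eqI)
  fix \<alpha>
  have d: "set p \<inter> set (dl @ [z]) = {}" using assms(1) by (simp add: ok_def)
  have zp: "last p \<noteq> z" using assms(2) last_in_set[of p] d by (metis disjoint_iff in_set_conv_decomp)
  show "\<alpha> \<in> GS p (dl @ [z]) \<longleftrightarrow> \<alpha> \<in> (\<lambda>\<beta>. \<beta> @ [z]) ` (GS p dl \<union> HS p dl)"
  proof
    assume a: "\<alpha> \<in> GS p (dl @ [z])"
    hence sh: "\<alpha> \<in> shuffles p (dl @ [z])" and a0: "\<alpha> ! 0 = dl ! 0" and al: "last \<alpha> = z"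
      using assms by (auto simp: GS_def nth_append)
    have ne: "\<alpha> \<noteq> []" using sh by auto
    define \<beta> where "\<beta> = butlast \<alpha>"
    have ab: "\<alpha> = \<beta> @ [z]" using ne al unfolding \<beta>_def by (metis append_butlast_last_id)
    have bsh: "\<beta> \<in> shuffles p dl" using sh zp unfolding ab snoc_in_shuffles_iff by auto
    have bne: "\<beta> \<noteq> []" using bsh assms by auto
    have b0: "\<beta> ! 0 = dl ! 0" using a0 bne unfolding ab by (simp add: nth_append)
    have "\<beta> \<in> GS p dl \<union> HS p dl"
      using shuffles_last_cases[OF bsh bne] bsh b0 by (auto simp: GS_def HS_def)
    thus "\<alpha> \<in> (\<lambda>\<beta>. \<beta> @ [z]) ` (GS p dl \<union> HS p dl)" using ab by blast
  next
    assume "\<alpha> \<in> (\<lambda>\<beta>. \<beta> @ [z]) ` (GS p dl \<union> HS p dl)"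
    then obtain \<beta> where b: "\<beta> \<in> GS p dl \<union> HS p dl" and ab: "\<alpha> = \<beta> @ [z]" by auto
    note m = GH_mem[OF b assms(3)]
    show "\<alpha> \<in> GS p (dl @ [z])"
      using m snoc_in_shuffles_rightI[OF m(1)] assms(3) unfolding ab GS_def by (auto simp: nth_append)
  qed
qed

lemma HS_snoc:
  assumes "ok (p @ [y]) dl" "p \<noteq> []" "dl \<noteq> []"
  shows "HS (p @ [y]) dl = (\<lambda>\<beta>. \<beta> @ [y]) ` (GS p dl \<union> HS p dl)"
proof (rule set_eqI)
  fix \<alpha>
  have d: "set (p @ [y]) \<inter> set dl = {}" using assms(1) by (simp add: ok_def)
  have zp: "last dl \<noteq> y" using assms(3) last_in_set[of dl] d by (metis disjoint_iff in_set_conv_decomp)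
  show "\<alpha> \<in> HS (p @ [y]) dl \<longleftrightarrow> \<alpha> \<in> (\<lambda>\<beta>. \<beta> @ [y]) ` (GS p dl \<union> HS p dl)"
  proof
    assume a: "\<alpha> \<in> HS (p @ [y]) dl"
    hence sh: "\<alpha> \<in> shuffles (p @ [y]) dl" and a0: "\<alpha> ! 0 = dl ! 0" and al: "last \<alpha> = y"
      using assms by (auto simp: HS_def)
    have ne: "\<alpha> \<noteq> []" using sh by auto
    define \<beta> where "\<beta> = butlast \<alpha>"
    have ab: "\<alpha> = \<beta> @ [y]" using ne al unfolding \<beta>_def by (metis append_butlast_last_id)
    have bsh: "\<beta> \<in> shuffles p dl" using sh zp unfolding ab snoc_in_shuffles_iff by auto
    have bne: "\<beta> \<noteq> []" using bsh assms by auto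
    have b0: "\<beta> ! 0 = dl ! 0" using a0 bne unfolding ab by (simp add: nth_append)
    have "\<beta> \<in> GS p dl \<union> HS p dl"
      using shuffles_last_cases[OF bsh bne] bsh b0 by (auto simp: GS_def HS_def)
    thus "\<alpha> \<in> (\<lambda>\<beta>. \<beta> @ [y]) ` (GS p dl \<union> HS p dl)" using ab by blast
  next
    assume "\<alpha> \<in> (\<lambda>\<beta>. \<beta> @ [y]) ` (GS p dl \<union> HS p dl)"
    then obtain \<beta> where b: "\<beta> \<in> GS p dl \<union> HS p dl" and ab: "\<alpha> = \<beta> @ [y]" by auto
    note m = GH_mem[OF b assms(3)]
    show "\<alpha> \<in> HS (p @ [y]) dl"
      using m snoc_in_shuffles_leftI[OF m(1)] unfolding ab HS_def by (auto simp: nth_append)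
  qed
qed

lemma GS_single:
  assumes "ok p [z]" "p \<noteq> []"
  shows "GS p [z] = {}"
proof -
  { fix \<alpha> assume a: "\<alpha> \<in> shuffles p [z]" "\<alpha> ! 0 = z" "last \<alpha> = z"
    have dist: "distinct \<alpha>" using distinct_disjoint_shuffles[of p "[z]" \<alpha>] a(1) assms(1)
      by (auto simp: ok_def)
    have len: "length \<alpha> \<ge> 2" using length_shuffles[OF a(1)] assms(2) by (cases p) auto
    have ne: "\<alpha> \<noteq> []" using len by auto
    hence "\<alpha> ! 0 = \<alpha> ! (length \<alpha> - 1)" using a last_conv_nth[of \<alpha>] by simp
    moreover have "\<alpha> ! 0 \<noteq> \<alpha> ! (length \<alpha> - 1)" using nth_eq_iff_index_eq[OF dist, of 0 "length \<alpha> - 1"] len ne by simp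
    ultimately have False by simp }
  thus ?thesis by (auto simp: GS_def)
qed

lemma HS_single:
  assumes "ok [y] dl" "dl \<noteq> []"
  shows "HS [y] dl = {dl @ [y]}"
proof (rule set_eqI)
  fix \<alpha>
  have d: "set [y] \<inter> set dl = {}" using assms(1) by (simp add: ok_def)
  have zp: "last dl \<noteq> y" using assms(2) last_in_set[of dl] d by auto
  show "\<alpha> \<in> HS [y] dl \<longleftrightarrow> \<alpha> \<in> {dl @ [y]}"
  proof
    assume a: "\<alpha> \<in> HS [y] dl"
    hence sh: "\<alpha> \<in> shuffles [y] dl" and al: "last \<alpha> = y" by (auto simp: HS_def)
    have ne: "\<alpha> \<noteq> []" using sh by auto
    have ab: "\<alpha> = butlast \<alpha> @ [y]" using ne al by (metis append_butlast_last_id)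
    have "butlast \<alpha> \<in> shuffles [] dl" using sh zp ab snoc_in_shuffles_iff[of "butlast \<alpha>" y "[y]" dl] by auto
    thus "\<alpha> \<in> {dl @ [y]}" using ab by simp
  next
    assume "\<alpha> \<in> {dl @ [y]}"
    thus "\<alpha> \<in> HS [y] dl" using assms(2) snoc_in_shuffles_leftI[of dl "[]" dl y]
      by (auto simp: HS_def nth_append)
  qed
qed



definition GF :: "int \<Rightarrow> int \<Rightarrow> int \<Rightarrow> int \<Rightarrow> int \<Rightarrow> int \<Rightarrow> real \<Rightarrow> real" where
  "GF m n r s M d x = gr (m - r + s - 1) (d - r) x * gr (n - s + r - 1) (d - s - 1) x * x powi (M + (d - s) * (d - r))"
definition HF :: "int \<Rightarrow> int \<Rightarrow> int \<Rightarrow> int \<Rightarrow> int \<Rightarrow> int \<Rightarrow> real \<Rightarrow> real" where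
  "HF m n r s M d x = gr (m - r + s - 1) (d - r - 1) x * gr (n - s + r - 1) (d - s - 1) x * x powi (M + (d - s) * (d - r) + m + s - d)"

lemma gr_pascal':
  assumes "N \<ge> 1" "x > 1" "N1 = N - 1" "K1 = K - 1" "k = N - K"
  shows "gr N K x = gr N1 K x + x powi k * gr N1 K1 x"
  using gr_pascal[OF assms(1,2)] assms(3-5) by simp

lemma powi_split: "(x::real) \<noteq> 0 \<Longrightarrow> E2 = E + k \<Longrightarrow> x powi E2 = x powi E * x powi k"
  by (simp add: power_int_add)

lemma alg_G0:
  assumes "x > 1" "m - r + s \<ge> 1"
  shows "GF m n r s M d x + HF m n r s M d x = GF (m + 1) n r s M d x"
proof -
  have x0: "x \<noteq> 0" using assms by auto
  have P: "gr (m + 1 - r + s - 1) (d - r) x = gr (m - r + s - 1) (d - r) x + x powi (m + s - d) * gr (m - r + s - 1) (d - r - 1) x"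
    by (rule gr_pascal') (use assms in auto)
  have E: "x powi (M + (d - s) * (d - r) + m + s - d) = x powi (M + (d - s) * (d - r)) * x powi (m + s - d)"
    by (rule powi_split[OF x0]) simp
  show ?thesis unfolding GF_def HF_def P E by (simp add: algebra_simps)
qed

lemma alg_G1:
  assumes "x > 1" "n - s + r \<ge> 1"
  shows "x powi (n + m) * GF m n r s M (d - 1) x + HF m n r s M d x = GF (m + 1) n (r + 1) s (M + m) d x"
proof -
  have x0: "x \<noteq> 0" using assms by auto
  have P: "gr (n - s + (r + 1) - 1) (d - s - 1) x = gr (n - s + r - 1) (d - s - 1) x + x powi (n + r - d + 1) * gr (n - s + r - 1) (d - s - 1 - 1) x"
    by (rule gr_pascal') (use assms in auto)
  have a1: "m + 1 - (r + 1) + s - 1 = m - r + s - 1" "d - (r + 1) = d - r - 1" "d - 1 - r = d - r - 1" "d - 1 - s - 1 = d - s - 1 - 1"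
    by simp_all
  have E1: "x powi (n + m) * x powi (M + (d - 1 - s) * (d - 1 - r)) = x powi (M + m + (d - s) * (d - (r + 1))) * x powi (n + r - d + 1)"
    using x0 by (simp add: power_int_add[symmetric]) (simp add: algebra_simps)
  have E2: "x powi (M + (d - s) * (d - r) + m + s - d) = x powi (M + m + (d - s) * (d - (r + 1)))"
    by (simp add: algebra_simps)
  show ?thesis unfolding GF_def HF_def P a1 E2
    using E1 by (simp add: algebra_simps)
qed

lemma alg_H0:
  assumes "x > 1" "n - s + r \<ge> 1"
  shows "x powi (n + m) * GF m n r s M (d - 1) x + HF m n r s M d x = HF m (n + 1) r s M d x"
proof -
  have x0: "x \<noteq> 0" using assms by auto
  have P: "gr (n + 1 - s + r - 1) (d - s - 1) x = gr (n - s + r - 1) (d - s - 1) x + x powi (n + r - d + 1) * gr (n - s + r - 1) (d - s - 1 - 1) x"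
    by (rule gr_pascal') (use assms in auto)
  have a1: "d - 1 - r = d - r - 1" "d - 1 - s - 1 = d - s - 1 - 1"
    by simp_all
  have E1: "x powi (n + m) * x powi (M + (d - 1 - s) * (d - 1 - r)) = x powi (M + (d - s) * (d - r) + m + s - d) * x powi (n + r - d + 1)"
    using x0 by (simp add: power_int_add[symmetric]) (simp add: algebra_simps)
  show ?thesis unfolding HF_def GF_def P a1
    using E1 by (simp add: algebra_simps)
qed

lemma alg_H1:
  assumes "x > 1" "m - r + s \<ge> 1"
  shows "x powi (n + m) * GF m n r s M (d - 1) x + x powi (n + m) * HF m n r s M (d - 1) x = HF m (n + 1) r (s + 1) (M + n) d x"
proof -
  have x0: "x \<noteq> 0" using assms by auto
  have P: "gr (m - r + (s + 1) - 1) (d - r - 1) x = gr (m - r + s - 1) (d - r - 1) x + x powi (m + s - d + 1) * gr (m - r + s - 1) (d - r - 1 - 1) x"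
    by (rule gr_pascal') (use assms in auto)
  have a1: "d - 1 - r = d - r - 1" "d - 1 - r - 1 = d - r - 1 - 1" "n + 1 - (s + 1) + r - 1 = n - s + r - 1"
    "d - (s + 1) - 1 = d - 1 - s - 1"
    by simp_all
  have E1: "x powi (n + m) * x powi (M + (d - 1 - s) * (d - 1 - r)) = x powi (M + n + (d - (s + 1)) * (d - r) + m + (s + 1) - d)"
    using x0 by (simp add: power_int_add[symmetric]) (simp add: algebra_simps)
  have E2: "x powi (n + m) * x powi (M + (d - 1 - s) * (d - 1 - r) + m + s - (d - 1)) = x powi (M + n + (d - (s + 1)) * (d - r) + m + (s + 1) - d) * x powi (m + s - d + 1)"
    using x0 by (simp add: power_int_add[symmetric]) (simp add: algebra_simps)
  define A1 where "A1 = gr (m - r + s - 1) (d - r - 1) x"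
  define A2 where "A2 = gr (m - r + s - 1) (d - r - 1 - 1) x"
  define B where "B = gr (n - s + r - 1) (d - 1 - s - 1) x"
  define X1 where "X1 = x powi (M + (d - 1 - s) * (d - 1 - r))"
  define X2 where "X2 = x powi (M + (d - 1 - s) * (d - 1 - r) + m + s - (d - 1))"
  define T where "T = x powi (M + n + (d - (s + 1)) * (d - r) + m + (s + 1) - d)"
  define y where "y = x powi (m + s - d + 1)"
  define z where "z = x powi (n + m)"
  have "x powi (n + m) * GF m n r s M (d - 1) x + x powi (n + m) * HF m n r s M (d - 1) x
     = A1 * B * (z * X1) + A2 * B * (z * X2)"
    unfolding GF_def HF_def A1_def A2_def B_def X1_def X2_def z_def a1 by (simp add: algebra_simps)
  also have "\<dots> = A1 * B * T + A2 * B * (T * y)"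
    using E1 E2 unfolding z_def X1_def X2_def T_def y_def by simp
  also have "\<dots> = HF m (n + 1) r (s + 1) (M + n) d x"
    unfolding HF_def P a1 A1_def A2_def B_def T_def y_def by (simp add: algebra_simps)
  finally show ?thesis .
qed

lemma gr_diag: "x > 1 \<Longrightarrow> gr (int n) (int n) x = 1"
proof (induction n)
  case 0 then show ?case by simp
next
  case (Suc n)
  have "gr (int (Suc n)) (int (Suc n)) x = gr (int n) (int (Suc n)) x + x powi 0 * gr (int n) (int n) x"
    by (rule gr_pascal') (use Suc in auto)
  then show ?case using Suc by (simp add: gr_big)
qed

lemma base_G: "s \<ge> 0 \<Longrightarrow> GF 1 n 0 s M d x = 0"
  unfolding GF_def by (cases "d \<le> s") (auto simp: gr_big)

lemma base_H:
  assumes "x > 1" "r \<ge> 0"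
  shows "HF m 1 r 0 M d x = (if d = r + 1 then x powi (M + m) else 0)"
proof -
  consider "d \<le> r" | "d = r + 1" | "d \<ge> r + 2" by linarith
  then show ?thesis
  proof cases
    case 1 then show ?thesis unfolding HF_def by simp
  next
    case 2
    have "gr r r x = 1" using gr_diag[OF assms(1), of "nat r"] assms(2) by simp
    then show ?thesis unfolding HF_def using 2 by (simp add: algebra_simps)
  next
    case 3 then show ?thesis unfolding HF_def using assms by (simp add: gr_big)
  qed
qed

lemma des_le: "xs \<noteq> [] \<Longrightarrow> des xs + 1 \<le> length xs"
proof -
  assume "xs \<noteq> []"
  have "des xs \<le> card {1..<length xs}" unfolding des_def by (rule card_mono) (use Des_sub in auto)
  thus ?thesis using \<open>xs \<noteq> []\<close> by (cases xs) auto
qed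

lemma W_snoc_Un:
  assumes "finite A" "finite B" "A \<inter> B = {}"
  shows "W ((\<lambda>\<beta>. \<beta> @ [z]) ` (A \<union> B)) d x = W ((\<lambda>\<beta>. \<beta> @ [z]) ` A) d x + W ((\<lambda>\<beta>. \<beta> @ [z]) ` B) d x"
proof -
  have inj: "inj (\<lambda>\<beta>. \<beta> @ [z])" by (auto simp: inj_def)
  have "(\<lambda>\<beta>. \<beta> @ [z]) ` A \<inter> (\<lambda>\<beta>. \<beta> @ [z]) ` B = {}"
    using assms(3) image_Int[OF inj, of A B] by simp
  thus ?thesis using assms by (simp add: image_Un W_Un)
qed

lemma ok_last_lt: "ok p dl \<Longrightarrow> p \<noteq> [] \<Longrightarrow> u \<in> set dl \<Longrightarrow> last p < u"
  unfolding ok_def using last_in_set by blast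

lemma main:
  assumes "ok p dl" "p \<noteq> []" "dl \<noteq> []" "x > 1"
  shows "W (GS p dl) d x = GF (int (length dl)) (int (length p)) (int (des dl)) (int (des p)) (int (maj dl + maj p)) d x
       \<and> W (HS p dl) d x = HF (int (length dl)) (int (length p)) (int (des dl)) (int (des p)) (int (maj dl + maj p)) d x"
  using assms
proof (induction "length p + length dl" arbitrary: p dl d rule: less_induct)
  case less
  note ok = less.prems(1) and pne = less.prems(2) and dne = less.prems(3) and x1 = less.prems(4)
  have x0: "x \<noteq> 0" using x1 by auto
  have G: "W (GS p dl) d x = GF (int (length dl)) (int (length p)) (int (des dl)) (int (des p)) (int (maj dl + maj p)) d x"
  proof -
    obtain dl' z where dl: "dl = dl' @ [z]" using dne by (metis rev_exhaust)
    show ?thesis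
    proof (cases "dl' = []")
      case True
      have "GS p dl = {}" using GS_single ok pne unfolding dl True by simp
      moreover have "des dl = 0" "length dl = 1" unfolding dl True by (simp_all add: des_def Des_def)
      ultimately show ?thesis using base_G by simp
    next
      case False
      have ok': "ok p dl'" using ok unfolding dl by (rule ok_snoc_dl)
      have IH: "\<And>d'. W (GS p dl') d' x = GF (int (length dl')) (int (length p)) (int (des dl')) (int (des p)) (int (maj dl' + maj p)) d' x
         \<and> W (HS p dl') d' x = HF (int (length dl')) (int (length p)) (int (des dl')) (int (des p)) (int (maj dl' + maj p)) d' x"
        using less.hyps[of p dl'] ok' pne False x1 unfolding dl by simp
      have zp: "last p < z" using ok_last_lt[OF ok pne] unfolding dl by simp
      have decomp: "W (GS p dl) d x = W ((\<lambda>\<beta>. \<beta> @ [z]) ` GS p dl') d x + W ((\<lambda>\<beta>. \<beta> @ [z]) ` HS p dl') d x"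
        unfolding dl GS_snoc[OF ok[unfolded dl] pne False]
        by (rule W_snoc_Un[OF finite_GS finite_HS GH_disj[OF ok' pne False]])
      have w1: "W ((\<lambda>\<beta>. \<beta> @ [z]) ` GS p dl') d x =
         (if z < last dl' then x ^ (length p + length dl') * W (GS p dl') (d - 1) x else W (GS p dl') d x)"
      proof (rule W_snoc[OF finite_GS])
        fix \<beta> assume b: "\<beta> \<in> GS p dl'"
        hence "\<beta> \<in> GS p dl' \<union> HS p dl'" by blast
        note m = GH_mem[OF this False]
        have "last \<beta> = last dl'" using b by (simp add: GS_def)
        thus "\<beta> \<noteq> [] \<and> length \<beta> = length p + length dl' \<and> (z < last \<beta>) = (z < last dl')"
          using m by simp
      qed
      have w2: "W ((\<lambda>\<beta>. \<beta> @ [z]) ` HS p dl') d x = W (HS p dl') d x"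
      proof -
        have "W ((\<lambda>\<beta>. \<beta> @ [z]) ` HS p dl') d x = (if False then x ^ (length p + length dl') * W (HS p dl') (d - 1) x else W (HS p dl') d x)"
        proof (rule W_snoc[OF finite_HS])
          fix \<beta> assume b: "\<beta> \<in> HS p dl'"
          hence "\<beta> \<in> GS p dl' \<union> HS p dl'" by blast
          note m = GH_mem[OF this False]
          have "last \<beta> = last p" using b by (simp add: HS_def)
          thus "\<beta> \<noteq> [] \<and> length \<beta> = length p + length dl' \<and> (z < last \<beta>) = False"
            using m zp by simp
        qed
        thus ?thesis by simp
      qed
      have rl: "des dl' + 1 \<le> length dl'" using des_le[OF False] .
      have sl: "des p + 1 \<le> length p" using des_le[OF pne] .
      show ?thesis
      proof (cases "z < last dl'")
        case True
        have dd: "des dl = des dl' + 1" "maj dl = maj dl' + length dl'" "length dl = length dl' + 1"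
          unfolding dl using des_snoc[OF False] maj_snoc[OF False] True by simp_all
        have "x ^ (length p + length dl') = x powi (int (length p) + int (length dl'))"
          by (simp add: power_int_of_nat[symmetric])
        hence "W (GS p dl) d x = x powi (int (length p) + int (length dl')) * GF (int (length dl')) (int (length p)) (int (des dl')) (int (des p)) (int (maj dl' + maj p)) (d - 1) x
            + HF (int (length dl')) (int (length p)) (int (des dl')) (int (des p)) (int (maj dl' + maj p)) d x"
          using decomp w1 w2 IH True by simp
        also have "\<dots> = GF (int (length dl') + 1) (int (length p)) (int (des dl') + 1) (int (des p)) (int (maj dl' + maj p) + int (length dl')) d x"
          by (rule alg_G1) (use x1 sl in auto)
        finally show ?thesis unfolding dd by (simp add: algebra_simps)
      next
        case False': False
        have dd: "des dl = des dl'" "maj dl = maj dl'" "length dl = length dl' + 1"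
          unfolding dl using des_snoc[OF False] maj_snoc[OF False] False' by simp_all
        have "W (GS p dl) d x = GF (int (length dl')) (int (length p)) (int (des dl')) (int (des p)) (int (maj dl' + maj p)) d x
            + HF (int (length dl')) (int (length p)) (int (des dl')) (int (des p)) (int (maj dl' + maj p)) d x"
          using decomp w1 w2 IH False' by simp
        also have "\<dots> = GF (int (length dl') + 1) (int (length p)) (int (des dl')) (int (des p)) (int (maj dl' + maj p)) d x"
          by (rule alg_G0) (use x1 rl in auto)
        finally show ?thesis unfolding dd by (simp add: algebra_simps)
      qed
    qed
  qed
  have H: "W (HS p dl) d x = HF (int (length dl)) (int (length p)) (int (des dl)) (int (des p)) (int (maj dl + maj p)) d x"
  proof -
    obtain p' y where p: "p = p' @ [y]" using pne by (metis rev_exhaust)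
    have yd: "y < last dl" using ok dne unfolding p ok_def by auto
    show ?thesis
    proof (cases "p' = []")
      case True
      have hs: "HS p dl = {dl @ [y]}" using HS_single ok dne unfolding p True by simp
      have dd: "des p = 0" "length p = 1" "maj p = 0" unfolding p True by (simp_all add: des_def Des_def maj_def)
      have "W (HS p dl) d x = (if int (des dl) + 1 = d then x ^ (maj dl + length dl) else 0)"
        unfolding hs W_single des_snoc[OF dne] maj_snoc[OF dne] using yd by simp
      also have "\<dots> = HF (int (length dl)) 1 (int (des dl)) 0 (int (maj dl)) d x"
        using base_H[OF x1, of "int (des dl)" "int (length dl)" "int (maj dl)" d]
        by (auto simp: power_int_of_nat[symmetric] algebra_simps)
      finally show ?thesis unfolding dd by simp
    next
      case False
      have ok': "ok p' dl" using ok unfolding p by (rule ok_snoc_p)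
      have IH: "\<And>d'. W (GS p' dl) d' x = GF (int (length dl)) (int (length p')) (int (des dl)) (int (des p')) (int (maj dl + maj p')) d' x
         \<and> W (HS p' dl) d' x = HF (int (length dl)) (int (length p')) (int (des dl)) (int (des p')) (int (maj dl + maj p')) d' x"
        using less.hyps[of p' dl] ok' dne False x1 unfolding p by simp
      have decomp: "W (HS p dl) d x = W ((\<lambda>\<beta>. \<beta> @ [y]) ` GS p' dl) d x + W ((\<lambda>\<beta>. \<beta> @ [y]) ` HS p' dl) d x"
        unfolding p HS_snoc[OF ok[unfolded p] False dne]
        by (rule W_snoc_Un[OF finite_GS finite_HS GH_disj[OF ok' False dne]])
      have w1: "W ((\<lambda>\<beta>. \<beta> @ [y]) ` GS p' dl) d x = x ^ (length p' + length dl) * W (GS p' dl) (d - 1) x"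
      proof -
        have "W ((\<lambda>\<beta>. \<beta> @ [y]) ` GS p' dl) d x = (if True then x ^ (length p' + length dl) * W (GS p' dl) (d - 1) x else W (GS p' dl) d x)"
        proof (rule W_snoc[OF finite_GS])
          fix \<beta> assume b: "\<beta> \<in> GS p' dl"
          hence "\<beta> \<in> GS p' dl \<union> HS p' dl" by blast
          note m = GH_mem[OF this dne]
          have "last \<beta> = last dl" using b by (simp add: GS_def)
          thus "\<beta> \<noteq> [] \<and> length \<beta> = length p' + length dl \<and> (y < last \<beta>) = True"
            using m yd by simp
        qed
        thus ?thesis by simp
      qed
      have w2: "W ((\<lambda>\<beta>. \<beta> @ [y]) ` HS p' dl) d x =
         (if y < last p' then x ^ (length p' + length dl) * W (HS p' dl) (d - 1) x else W (HS p' dl) d x)"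
      proof (rule W_snoc[OF finite_HS])
        fix \<beta> assume b: "\<beta> \<in> HS p' dl"
        hence "\<beta> \<in> GS p' dl \<union> HS p' dl" by blast
        note m = GH_mem[OF this dne]
        have "last \<beta> = last p'" using b by (simp add: HS_def)
        thus "\<beta> \<noteq> [] \<and> length \<beta> = length p' + length dl \<and> (y < last \<beta>) = (y < last p')"
          using m by simp
      qed
      have rl: "des dl + 1 \<le> length dl" using des_le[OF dne] .
      have sl: "des p' + 1 \<le> length p'" using des_le[OF False] .
      have xp: "x ^ (length p' + length dl) = x powi (int (length p') + int (length dl))"
        by (simp add: power_int_of_nat[symmetric])
      show ?thesis
      proof (cases "y < last p'")
        case True
        have dd: "des p = des p' + 1" "maj p = maj p' + length p'" "length p = length p' + 1"
          unfolding p using des_snoc[OF False] maj_snoc[OF False] True by simp_all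
        have "W (HS p dl) d x = x powi (int (length p') + int (length dl)) * GF (int (length dl)) (int (length p')) (int (des dl)) (int (des p')) (int (maj dl + maj p')) (d - 1) x
            + x powi (int (length p') + int (length dl)) * HF (int (length dl)) (int (length p')) (int (des dl)) (int (des p')) (int (maj dl + maj p')) (d - 1) x"
          using decomp w1 w2 IH True xp by simp
        also have "\<dots> = HF (int (length dl)) (int (length p') + 1) (int (des dl)) (int (des p') + 1) (int (maj dl + maj p') + int (length p')) d x"
          by (rule alg_H1) (use x1 rl in auto)
        finally show ?thesis unfolding dd by (simp add: algebra_simps)
      next
        case False': False
        have dd: "des p = des p'" "maj p = maj p'" "length p = length p' + 1"
          unfolding p using des_snoc[OF False] maj_snoc[OF False] False' by simp_all
        have "W (HS p dl) d x = x powi (int (length p') + int (length dl)) * GF (int (length dl)) (int (length p')) (int (des dl)) (int (des p')) (int (maj dl + maj p')) (d - 1) x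
            + HF (int (length dl)) (int (length p')) (int (des dl)) (int (des p')) (int (maj dl + maj p')) d x"
          using decomp w1 w2 IH False' xp by simp
        also have "\<dots> = HF (int (length dl)) (int (length p') + 1) (int (des dl)) (int (des p')) (int (maj dl + maj p')) d x"
          by (rule alg_H0) (use x1 sl in auto)
        finally show ?thesis unfolding dd by (simp add: algebra_simps)
      qed
    qed
  qed
  show ?case using G H by simp
qed



lemma alg_F:
  assumes "x > 1" "m - r + s \<ge> 1"
  shows "GF m n r s M d x + HF m n r s M d x = gr (m - r + s) (d - r) x * gr (n - s + r - 1) (d - s - 1) x * x powi (M + (d - s) * (d - r))"
proof -
  have x0: "x \<noteq> 0" using assms by auto
  have P: "gr (m - r + s) (d - r) x = gr (m - r + s - 1) (d - r) x + x powi (m + s - d) * gr (m - r + s - 1) (d - r - 1) x"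
    by (rule gr_pascal') (use assms in auto)
  have E: "x powi (M + (d - s) * (d - r) + m + s - d) = x powi (M + (d - s) * (d - r)) * x powi (m + s - d)"
    by (rule powi_split[OF x0]) simp
  show ?thesis unfolding GF_def HF_def P E by (simp add: algebra_simps)
qed

lemma fin_conv:
  assumes "gr N1 K1 x * gr N2 K2 x \<noteq> 0 \<Longrightarrow> P \<ge> 0" "M \<ge> 0"
  shows "gr N1 K1 x * gr N2 K2 x * x powi (M + P) = gr N1 K1 x * gr N2 K2 x * x ^ (nat M + nat P)"
proof (cases "gr N1 K1 x * gr N2 K2 x = 0")
  case True then show ?thesis by simp
next
  case False
  hence "P \<ge> 0" using assms(1) by blast
  hence "M + P = int (nat M + nat P)" using assms(2) by simp
  then show ?thesis by (simp only: power_int_of_nat)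
qed

lemma ev_sum_W: "ev (\<Sum>\<alpha>\<in>{\<alpha>\<in>A. des \<alpha> = d}. qvar ^ maj \<alpha>) x = W A (int d) x"
  by (simp add: W_def)

lemma Sh_l_eq:
  assumes "ok p dl" "p \<noteq> []" "dl \<noteq> []"
  shows "Sh_l p dl = GS p dl \<union> HS p dl"
proof -
  { fix \<alpha> assume a: "\<alpha> \<in> shuffles p dl"
    hence "\<alpha> \<noteq> []" using assms by auto
    hence "last \<alpha> = last p \<or> last \<alpha> = last dl" using shuffles_last_cases[OF a] by auto }
  thus ?thesis unfolding Sh_l_def GS_def HS_def by auto
qed

lemma Sh_ls_eq: "Sh_ls p dl = GS p dl"
  unfolding Sh_ls_def GS_def by simp

lemma Sh_ll_eq:
  assumes "ok p (a # dl)" "p \<noteq> []" "dl \<noteq> []"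
  shows "Sh_ll p (a # dl) = (#) a ` (GS p dl \<union> HS p dl)"
proof (rule set_eqI)
  fix \<alpha>
  have hp: "hd p \<noteq> a" using assms(1,2) unfolding ok_def by (metis disjoint_iff hd_in_set list.set_intros(1))
  show "\<alpha> \<in> Sh_ll p (a # dl) \<longleftrightarrow> \<alpha> \<in> (#) a ` (GS p dl \<union> HS p dl)"
  proof
    assume "\<alpha> \<in> Sh_ll p (a # dl)"
    hence sh: "\<alpha> \<in> shuffles p (a # dl)" and a0: "\<alpha> ! 0 = a" and a1: "\<alpha> ! 1 = dl ! 0"
      unfolding Sh_ll_def by auto
    have "\<alpha> \<noteq> []" using sh by auto
    then obtain w \<beta> where ab: "\<alpha> = w # \<beta>" by (cases \<alpha>) auto
    have w: "w = a" using a0 ab by simp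
    have bsh: "\<beta> \<in> shuffles p dl" using sh hp unfolding ab w Cons_in_shuffles_iff by auto
    have bne: "\<beta> \<noteq> []" using bsh assms(3) by auto
    have b0: "\<beta> ! 0 = dl ! 0" using a1 ab by simp
    have "\<beta> \<in> GS p dl \<union> HS p dl"
      using shuffles_last_cases[OF bsh bne] bsh b0 by (auto simp: GS_def HS_def)
    thus "\<alpha> \<in> (#) a ` (GS p dl \<union> HS p dl)" using ab w by blast
  next
    assume "\<alpha> \<in> (#) a ` (GS p dl \<union> HS p dl)"
    then obtain \<beta> where b: "\<beta> \<in> GS p dl \<union> HS p dl" and ab: "\<alpha> = a # \<beta>" by auto
    note m = GH_mem[OF b assms(3)]
    show "\<alpha> \<in> Sh_ll p (a # dl)"
      using m Cons_in_shuffles_rightI[OF m(1), of a] unfolding ab Sh_ll_def by simp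
  qed
qed

lemma prod_nz_cond:
  assumes "gr N1 (d - r) x * gr N2 (d - s - 1) x \<noteq> 0"
  shows "(d - s) * (d - r) \<ge> 0" "(d - s + 1) * (d - r) \<ge> 0"
proof -
  have "\<not> d - r < 0" "\<not> d - s - 1 < 0" using assms by (auto simp del: gr_neg simp add: gr_def)
  thus "(d - s) * (d - r) \<ge> 0" "(d - s + 1) * (d - r) \<ge> 0" by simp_all
qed

theorem theorem3p5:
  fixes \<pi> \<delta> :: "int list" and m n r s d :: nat
  assumes "distinct \<delta>" and "distinct \<pi>"
    and "length \<delta> = m" and "length \<pi> = n"
    and "m \<ge> 2" and "n \<ge> 1"
    and "set \<delta> \<inter> set \<pi> = {}"
    and "des \<delta> = r" and "des \<pi> = s"
    and "\<delta> ! 0 < \<delta> ! 1"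
    and "\<forall>x\<in>set \<delta>. \<forall>y\<in>set \<pi>. y < x"
  shows
    "((\<Sum>\<alpha>\<in>{\<alpha>\<in>Sh_l \<pi> \<delta>. des \<alpha> = d}. qvar ^ maj \<alpha>) =
       gauss (int m - int r + int s) (int d - int r) * gauss (int n - int s + int r - 1) (int d - int s - 1)
       * qvar ^ (maj \<delta> + maj \<pi> + nat ((int d - int s) * (int d - int r))))
  \<and>
    ((\<Sum>\<alpha>\<in>{\<alpha>\<in>Sh_ls \<pi> \<delta>. des \<alpha> = d}. qvar ^ maj \<alpha>) =
       gauss (int m - int r + int s - 1) (int d - int r) * gauss (int n - int s + int r - 1) (int d - int s - 1)
       * qvar ^ (maj \<delta> + maj \<pi> + nat ((int d - int s) * (int d - int r))))
  \<and>
    ((\<Sum>\<alpha>\<in>{\<alpha>\<in>Sh_ll \<pi> \<delta>. des \<alpha> = d}. qvar ^ maj \<alpha>) =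
       gauss (int m - int r + int s - 1) (int d - int r) * gauss (int n - int s + int r - 1) (int d - int s - 1)
       * qvar ^ (maj \<delta> + maj \<pi> + nat ((int d - int s + 1) * (int d - int r))))"
proof -
  note a = assms
  have ok: "ok \<pi> \<delta>" using a unfolding ok_def by auto
  have pne: "\<pi> \<noteq> []" and dne: "\<delta> \<noteq> []" using a by auto
  have sl: "s + 1 \<le> n" using des_le[OF pne] a by simp
  have rl: "r + 1 \<le> m" using des_le[OF dne] a by simp
  define M where "M = maj \<delta> + maj \<pi>"
  have MAIN: "\<And>d' x. x > 1 \<Longrightarrow> W (GS \<pi> \<delta>) d' x = GF (int m) (int n) (int r) (int s) (int M) d' x
       \<and> W (HS \<pi> \<delta>) d' x = HF (int m) (int n) (int r) (int s) (int M) d' x"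
    using main[OF ok pne dne] a unfolding M_def by simp
  have P1: "(\<Sum>\<alpha>\<in>{\<alpha>\<in>Sh_l \<pi> \<delta>. des \<alpha> = d}. qvar ^ maj \<alpha>) =
       gauss (int m - int r + int s) (int d - int r) * gauss (int n - int s + int r - 1) (int d - int s - 1)
       * qvar ^ (maj \<delta> + maj \<pi> + nat ((int d - int s) * (int d - int r)))"
  proof (rule ev_inj)
    fix x :: real assume x: "x > 1"
    have "ev (\<Sum>\<alpha>\<in>{\<alpha>\<in>Sh_l \<pi> \<delta>. des \<alpha> = d}. qvar ^ maj \<alpha>) x = W (GS \<pi> \<delta>) (int d) x + W (HS \<pi> \<delta>) (int d) x"
      unfolding ev_sum_W Sh_l_eq[OF ok pne dne] by (rule W_Un[OF finite_GS finite_HS GH_disj[OF ok pne dne]])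
    also have "\<dots> = gr (int m - int r + int s) (int d - int r) x * gr (int n - int s + int r - 1) (int d - int s - 1) x
        * x powi (int M + (int d - int s) * (int d - int r))"
      using MAIN[OF x] alg_F[OF x, of "int m" "int r" "int s" "int n" "int M" "int d"] rl by simp
    also have "\<dots> = gr (int m - int r + int s) (int d - int r) x * gr (int n - int s + int r - 1) (int d - int s - 1) x
        * x ^ (nat (int M) + nat ((int d - int s) * (int d - int r)))"
      by (rule fin_conv) (use prod_nz_cond in auto)
    also have "\<dots> = ev (gauss (int m - int r + int s) (int d - int r) * gauss (int n - int s + int r - 1) (int d - int s - 1)
       * qvar ^ (maj \<delta> + maj \<pi> + nat ((int d - int s) * (int d - int r)))) x"
      using gauss_ev[OF _ x] rl sl unfolding M_def nat_int by simp
    finally show "ev (\<Sum>\<alpha>\<in>{\<alpha>\<in>Sh_l \<pi> \<delta>. des \<alpha> = d}. qvar ^ maj \<alpha>) x = ev (gauss (int m - int r + int s) (int d - int r) * gauss (int n - int s + int r - 1) (int d - int s - 1)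
       * qvar ^ (maj \<delta> + maj \<pi> + nat ((int d - int s) * (int d - int r)))) x" .
  qed
  have P2: "(\<Sum>\<alpha>\<in>{\<alpha>\<in>Sh_ls \<pi> \<delta>. des \<alpha> = d}. qvar ^ maj \<alpha>) =
       gauss (int m - int r + int s - 1) (int d - int r) * gauss (int n - int s + int r - 1) (int d - int s - 1)
       * qvar ^ (maj \<delta> + maj \<pi> + nat ((int d - int s) * (int d - int r)))"
  proof (rule ev_inj)
    fix x :: real assume x: "x > 1"
    have "ev (\<Sum>\<alpha>\<in>{\<alpha>\<in>Sh_ls \<pi> \<delta>. des \<alpha> = d}. qvar ^ maj \<alpha>) x = W (GS \<pi> \<delta>) (int d) x"
      unfolding ev_sum_W Sh_ls_eq ..
    also have "\<dots> = gr (int m - int r + int s - 1) (int d - int r) x * gr (int n - int s + int r - 1) (int d - int s - 1) x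
        * x powi (int M + (int d - int s) * (int d - int r))"
      using MAIN[OF x] unfolding GF_def by simp
    also have "\<dots> = gr (int m - int r + int s - 1) (int d - int r) x * gr (int n - int s + int r - 1) (int d - int s - 1) x
        * x ^ (nat (int M) + nat ((int d - int s) * (int d - int r)))"
      by (rule fin_conv) (use prod_nz_cond in auto)
    also have "\<dots> = ev (gauss (int m - int r + int s - 1) (int d - int r) * gauss (int n - int s + int r - 1) (int d - int s - 1)
       * qvar ^ (maj \<delta> + maj \<pi> + nat ((int d - int s) * (int d - int r)))) x"
      using gauss_ev[OF _ x] rl sl unfolding M_def nat_int by simp
    finally show "ev (\<Sum>\<alpha>\<in>{\<alpha>\<in>Sh_ls \<pi> \<delta>. des \<alpha> = d}. qvar ^ maj \<alpha>) x = ev (gauss (int m - int r + int s - 1) (int d - int r) * gauss (int n - int s + int r - 1) (int d - int s - 1)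
       * qvar ^ (maj \<delta> + maj \<pi> + nat ((int d - int s) * (int d - int r)))) x" .
  qed
  obtain a0 \<delta>' where dd: "\<delta> = a0 # \<delta>'" using dne by (cases \<delta>) auto
  have d'ne: "\<delta>' \<noteq> []" using a dd by auto
  have lt: "a0 < hd \<delta>'" using a(10) d'ne unfolding dd by (cases \<delta>') auto
  have ok': "ok \<pi> \<delta>'" using ok unfolding dd ok_def by auto
  have okc: "ok \<pi> (a0 # \<delta>')" using ok dd by simp
  have desd: "des \<delta>' = r" using des_Cons[OF d'ne lt] a dd by simp
  have majd: "maj \<delta> = maj \<delta>' + r" using maj_Cons[OF d'ne lt] desd dd by simp
  have lend: "length \<delta>' = m - 1" using a dd by simp
  have rl': "r + 1 \<le> m - 1" using des_le[OF d'ne] desd lend by simp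
  define M' where "M' = maj \<delta>' + maj \<pi>"
  have MAIN': "\<And>d' x. x > 1 \<Longrightarrow> W (GS \<pi> \<delta>') d' x = GF (int (m - 1)) (int n) (int r) (int s) (int M') d' x
       \<and> W (HS \<pi> \<delta>') d' x = HF (int (m - 1)) (int n) (int r) (int s) (int M') d' x"
    using main[OF ok' pne d'ne] a desd lend unfolding M'_def by simp
  have P3: "(\<Sum>\<alpha>\<in>{\<alpha>\<in>Sh_ll \<pi> \<delta>. des \<alpha> = d}. qvar ^ maj \<alpha>) =
       gauss (int m - int r + int s - 1) (int d - int r) * gauss (int n - int s + int r - 1) (int d - int s - 1)
       * qvar ^ (maj \<delta> + maj \<pi> + nat ((int d - int s + 1) * (int d - int r)))"
  proof (rule ev_inj)
    fix x :: real assume x: "x > 1"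
    have x0: "x \<noteq> 0" using x by auto
    have im: "int (m - 1) = int m - 1" using a by simp
    have "ev (\<Sum>\<alpha>\<in>{\<alpha>\<in>Sh_ll \<pi> \<delta>. des \<alpha> = d}. qvar ^ maj \<alpha>) x = W ((#) a0 ` (GS \<pi> \<delta>' \<union> HS \<pi> \<delta>')) (int d) x"
      unfolding ev_sum_W dd Sh_ll_eq[OF okc pne d'ne] ..
    also have "\<dots> = x ^ nat (int d) * W (GS \<pi> \<delta>' \<union> HS \<pi> \<delta>') (int d) x"
    proof (rule W_Cons)
      fix \<beta> assume b: "\<beta> \<in> GS \<pi> \<delta>' \<union> HS \<pi> \<delta>'"
      note m = GH_mem[OF b d'ne]
      have "hd \<beta> = hd \<delta>'" using m(2,3) d'ne by (simp add: hd_conv_nth)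
      thus "\<beta> \<noteq> [] \<and> a0 < hd \<beta>" using m lt by simp
    qed simp_all
    also have "\<dots> = x powi (int d) * (GF (int (m - 1)) (int n) (int r) (int s) (int M') (int d) x + HF (int (m - 1)) (int n) (int r) (int s) (int M') (int d) x)"
      using MAIN'[OF x] W_Un[OF finite_GS finite_HS GH_disj[OF ok' pne d'ne]] by (simp add: power_int_of_nat)
    also have "\<dots> = x powi (int d) * (gr (int m - int r + int s - 1) (int d - int r) x * gr (int n - int s + int r - 1) (int d - int s - 1) x
        * x powi (int M' + (int d - int s) * (int d - int r)))"
    proof -
      have c: "int (m - 1) - int r + int s \<ge> 1" using rl' by simp
      have e2: "int (m - 1) - int r + int s = int m - int r + int s - 1" using a by simp
      show ?thesis using alg_F[OF x c, of "int n" "int M'" "int d"] unfolding e2 by simp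
    qed
    also have "\<dots> = gr (int m - int r + int s - 1) (int d - int r) x * gr (int n - int s + int r - 1) (int d - int s - 1) x
        * x powi (int (M' + r) + (int d - int s + 1) * (int d - int r))"
    proof -
      have "x powi (int (M' + r) + (int d - int s + 1) * (int d - int r)) = x powi (int d) * x powi (int M' + (int d - int s) * (int d - int r))"
        by (rule powi_split[OF x0]) (simp add: algebra_simps)
      thus ?thesis by (simp only: mult_ac)
    qed
    also have "\<dots> = gr (int m - int r + int s - 1) (int d - int r) x * gr (int n - int s + int r - 1) (int d - int s - 1) x
        * x ^ (nat (int (M' + r)) + nat ((int d - int s + 1) * (int d - int r)))"
      by (rule fin_conv) (use prod_nz_cond in auto)
    also have "\<dots> = ev (gauss (int m - int r + int s - 1) (int d - int r) * gauss (int n - int s + int r - 1) (int d - int s - 1)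
       * qvar ^ (maj \<delta> + maj \<pi> + nat ((int d - int s + 1) * (int d - int r)))) x"
      using gauss_ev[OF _ x] rl sl unfolding M'_def nat_int majd by (simp add: algebra_simps)
    finally show "ev (\<Sum>\<alpha>\<in>{\<alpha>\<in>Sh_ll \<pi> \<delta>. des \<alpha> = d}. qvar ^ maj \<alpha>) x = ev (gauss (int m - int r + int s - 1) (int d - int r) * gauss (int n - int s + int r - 1) (int d - int s - 1)
       * qvar ^ (maj \<delta> + maj \<pi> + nat ((int d - int s + 1) * (int d - int r)))) x" .
  qed
  show ?thesis using P1 P2 P3 by blast
qed

end
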